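(* Let $C\subseteq\mathbb{F}_2^n$ be a binary linear code with $\mathbf{1}_n\in C$, whose dual $C^\perp$ has minimum distance $d^\perp$, and let $t$ be a positive integer such that $$d^\perp-t=\#\{u \mid C_u\neq\emptyset,\ 0<u\le n-t\}=1.$$ Then the support design $D_{n/2}$ of $C$ for weight $n/2$ is a $1$-design or a $3$-design; more precisely, the largest integer $s\ge1$ such that $D_{n/2}$ is an $s$-design satisfies $s\in\{1,3\}$.
   Context: $\mathbf{1}_n$ is the all-ones vector; $C^\perp$ is the dual code with respect to the standard inner product; $d^\perp$ is the minimum nonzero weight of $C^\perp$; $C_u=\{c\in C:\mathrm{wt}(c)=u\}$ (Hamming weight). In this situation the nonzero weights of $C$ are exactly $n/2$ and $n$, with $n$ even. An $s$-design on a point set $X$ is a collection of blocks ($k$-subsets of $X$) such that every $s$-subset of $X$ lies in the same number of blocks. The support design $D_{n/2}$ has points $\{1,\dots,n\}$ and blocks the supports $\{i:c_i\neq0\}$ of codewords $c\in C$ of weight $n/2$. *)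

theory Defs
  imports Main "HOL-Library.Z2"
begin

definition vecs :: "nat \<Rightarrow> (nat \<Rightarrow> bit) set" where
  "vecs n = {x. \<forall>i. n \<le> i \<longrightarrow> x i = 0}"

definition supp :: "nat \<Rightarrow> (nat \<Rightarrow> bit) \<Rightarrow> nat set" where
  "supp n x = {i \<in> {0..<n}. x i \<noteq> 0}"

definition wt :: "nat \<Rightarrow> (nat \<Rightarrow> bit) \<Rightarrow> nat" where
  "wt n x = card (supp n x)"

definition ones :: "nat \<Rightarrow> (nat \<Rightarrow> bit)" where
  "ones n = (\<lambda>i. if i < n then 1 else 0)"

definition binary_linear_code :: "nat \<Rightarrow> (nat \<Rightarrow> bit) set \<Rightarrow> bool" where
  "binary_linear_code n C \<longleftrightarrow> C \<subseteq> vecs n \<and> (\<lambda>_. 0) \<in> C \<and>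
     (\<forall>x\<in>C. \<forall>y\<in>C. (\<lambda>i. x i + y i) \<in> C) \<and> (\<forall>a x. x \<in> C \<longrightarrow> (\<lambda>i. a * x i) \<in> C)"

definition inner :: "nat \<Rightarrow> (nat \<Rightarrow> bit) \<Rightarrow> (nat \<Rightarrow> bit) \<Rightarrow> bit" where
  "inner n x y = (\<Sum>i<n. x i * y i)"

definition dual_code :: "nat \<Rightarrow> (nat \<Rightarrow> bit) set \<Rightarrow> (nat \<Rightarrow> bit) set" where
  "dual_code n C = {y \<in> vecs n. \<forall>x\<in>C. inner n x y = 0}"

definition is_min_distance :: "nat \<Rightarrow> (nat \<Rightarrow> bit) set \<Rightarrow> nat \<Rightarrow> bool" where
  "is_min_distance n D d \<longleftrightarrow>
     (\<exists>c\<in>D. c \<noteq> (\<lambda>_. 0) \<and> wt n c = d) \<and> (\<forall>c\<in>D. c \<noteq> (\<lambda>_. 0) \<longrightarrow> d \<le> wt n c)"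

definition code_weight_class :: "nat \<Rightarrow> (nat \<Rightarrow> bit) set \<Rightarrow> nat \<Rightarrow> (nat \<Rightarrow> bit) set" where
  "code_weight_class n C u = {c \<in> C. wt n c = u}"

definition support_design :: "nat \<Rightarrow> (nat \<Rightarrow> bit) set \<Rightarrow> nat \<Rightarrow> nat set set" where
  "support_design n C u = supp n ` code_weight_class n C u"

definition is_design :: "nat set \<Rightarrow> nat \<Rightarrow> nat set set \<Rightarrow> nat \<Rightarrow> bool" where
  "is_design X k B s \<longleftrightarrow> s \<le> k \<and> (\<forall>b\<in>B. b \<subseteq> X \<and> card b = k) \<and>
     (\<exists>lam. \<forall>S. S \<subseteq> X \<and> card S = s \<longrightarrow> card {b \<in> B. S \<subseteq> b} = lam)"

end

theory Submission
  imports Defs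
begin



declare add_bit_eq_xor[simp del] mult_bit_eq_and[simp del]

lemma bit_cases: "(x::bit) = 0 \<or> x = 1" by auto
lemma bit_add_self[simp]: "(x::bit) + x = 0" using bit_cases[of x] by auto

lemma bit_sum_parity:
  assumes "finite A"
  shows "sum (f :: 'a \<Rightarrow> bit) A = (if even (card {i\<in>A. f i \<noteq> 0}) then 0 else 1)"
  using assms
proof (induction A rule: finite_induct)
  case empty then show ?case by simp
next
  case (insert a A)
  have fin: "finite {i\<in>A. f i \<noteq> 0}" using insert by auto
  show ?case
  proof (cases "f a = 0")
    case True
    then have "{i\<in>insert a A. f i \<noteq> 0} = {i\<in>A. f i \<noteq> 0}" by auto
    then show ?thesis using insert True by simp
  next
    case False
    then have f1: "f a = 1" using bit_cases by auto
    have "{i\<in>insert a A. f i \<noteq> 0} = insert a {i\<in>A. f i \<noteq> 0}" using False by auto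
    moreover have "a \<notin> {i\<in>A. f i \<noteq> 0}" using insert by auto
    ultimately have "card {i\<in>insert a A. f i \<noteq> 0} = Suc (card {i\<in>A. f i \<noteq> 0})"
      using fin by simp
    then show ?thesis using insert f1 by auto
  qed
qed

definition chi :: "bit \<Rightarrow> int" where "chi b = (if b = 0 then 1 else -1)"

lemma chi_add: "chi (a + b) = chi a * chi b"
  using bit_cases[of a] bit_cases[of b] by (auto simp: chi_def)

lemma chi_0[simp]: "chi 0 = 1" and chi_1[simp]: "chi 1 = -1" by (auto simp: chi_def)

definition ind :: "nat set \<Rightarrow> nat \<Rightarrow> bit" where "ind A = (\<lambda>i. if i \<in> A then 1 else 0)"

lemma vec_eq_ind: "x \<in> vecs n \<Longrightarrow> x = ind (supp n x)"
proof (rule ext)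
  fix i assume x: "x \<in> vecs n"
  show "x i = ind (supp n x) i"
  proof (cases "i < n")
    case True then show ?thesis unfolding ind_def supp_def using bit_cases[of "x i"] by auto
  next
    case False then show ?thesis using x unfolding ind_def supp_def vecs_def by auto
  qed
qed

lemma ind_in_vecs: "A \<subseteq> {0..<n} \<Longrightarrow> ind A \<in> vecs n"
  unfolding vecs_def ind_def by auto

lemma supp_ind: "A \<subseteq> {0..<n} \<Longrightarrow> supp n (ind A) = A"
  unfolding supp_def ind_def by auto

lemma supp_sub: "supp n x \<subseteq> {0..<n}" unfolding supp_def by auto

lemma finite_supp[simp]: "finite (supp n x)" using supp_sub finite_subset by blast

lemma vecs_image: "vecs n = ind ` Pow {0..<n}"
proof
  show "vecs n \<subseteq> ind ` Pow {0..<n}"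
    using vec_eq_ind supp_sub by blast
  show "ind ` Pow {0..<n} \<subseteq> vecs n" using ind_in_vecs by auto
qed

lemma finite_vecs[simp]: "finite (vecs n)" by (simp add: vecs_image)

lemma supp_inj: "inj_on (supp n) (vecs n)"
proof (rule inj_onI)
  fix x y assume "x \<in> vecs n" "y \<in> vecs n" "supp n x = supp n y"
  then show "x = y" using vec_eq_ind[of x n] vec_eq_ind[of y n] by simp
qed

lemma supp_eq_empty: "x \<in> vecs n \<Longrightarrow> supp n x = {} \<longleftrightarrow> x = (\<lambda>_. 0)"
proof
  assume x: "x \<in> vecs n" "supp n x = {}"
  then show "x = (\<lambda>_. 0)" using vec_eq_ind[OF x(1)] unfolding ind_def by simp
next
  assume "x = (\<lambda>_. 0)" then show "supp n x = {}" unfolding supp_def by simp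
qed

lemma wt_zero_iff: "x \<in> vecs n \<Longrightarrow> wt n x = 0 \<longleftrightarrow> x = (\<lambda>_. 0)"
  unfolding wt_def using supp_eq_empty by simp

lemma wt_le: "wt n x \<le> n" unfolding wt_def using supp_sub card_mono
  by (metis card_atLeastLessThan diff_zero finite_atLeastLessThan)

lemma supp_plus_ones: "supp n (\<lambda>i. x i + ones n i) = {0..<n} - supp n x"
  unfolding supp_def ones_def using bit_cases by auto

lemma wt_plus_ones: "wt n (\<lambda>i. x i + ones n i) = n - wt n x"
  unfolding wt_def supp_plus_ones using supp_sub
  by (simp add: card_Diff_subset)

lemma blc_sub: "binary_linear_code n C \<Longrightarrow> C \<subseteq> vecs n" unfolding binary_linear_code_def by auto
lemma blc_add: "binary_linear_code n C \<Longrightarrow> x \<in> C \<Longrightarrow> y \<in> C \<Longrightarrow> (\<lambda>i. x i + y i) \<in> C"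
  unfolding binary_linear_code_def by auto
lemma blc_zero: "binary_linear_code n C \<Longrightarrow> (\<lambda>_. 0) \<in> C" unfolding binary_linear_code_def by auto
lemma blc_finite: "binary_linear_code n C \<Longrightarrow> finite C" by (rule finite_subset[OF blc_sub finite_vecs])

lemma inner_add: "inner n (\<lambda>i. x i + z i) y = inner n x y + inner n z y"
  unfolding inner_def by (simp only: distrib_right sum.distrib)

lemma add_cancel_bit: "(\<lambda>i. (c i + x i) + (x i::bit)) = c"
proof (rule ext)
  fix i show "(c i + x i) + x i = c i" by (simp only: add.assoc bit_add_self add_0_right)
qed
lemma sum_shift:
  assumes C: "binary_linear_code n C" and x: "x \<in> C"
  shows "(\<Sum>c\<in>C. f (\<lambda>i. c i + x i)) = (\<Sum>c\<in>C. (f c :: 'b::comm_monoid_add))"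
proof -
  let ?h = "\<lambda>c. (\<lambda>i. c i + x i)"
  have inj: "inj_on ?h C" by (rule inj_onI) (metis add_cancel_bit)
  have im: "?h ` C = C"
  proof
    show "?h ` C \<subseteq> C" using blc_add[OF C _ x] by auto
    show "C \<subseteq> ?h ` C"
    proof
      fix c assume "c \<in> C"
      then have h: "?h c \<in> C" using blc_add[OF C _ x] by auto
      have "c = ?h (?h c)" using add_cancel_bit by metis
      then show "c \<in> ?h ` C" using h by (rule image_eqI)
    qed
  qed
  have "(\<Sum>c\<in>C. f c) = (\<Sum>c\<in>?h ` C. f c)" using im by simp
  also have "\<dots> = (\<Sum>c\<in>C. f (?h c))" using sum.reindex[OF inj] by simp
  finally show ?thesis by simp
qed

lemma charsum_code:
  assumes C: "binary_linear_code n C" and y: "y \<in> vecs n" and nd: "y \<notin> dual_code n C"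
  shows "(\<Sum>c\<in>C. chi (inner n c y)) = 0"
proof -
  obtain x where x: "x \<in> C" "inner n x y \<noteq> 0" using y nd unfolding dual_code_def by auto
  then have x1: "inner n x y = 1" using bit_cases by auto
  have "(\<Sum>c\<in>C. chi (inner n c y)) = (\<Sum>c\<in>C. chi (inner n (\<lambda>i. c i + x i) y))"
    using sum_shift[OF C x(1), of "\<lambda>c. chi (inner n c y)"] by simp
  also have "\<dots> = (\<Sum>c\<in>C. - chi (inner n c y))"
    by (simp add: inner_add chi_add x1)
  also have "\<dots> = - (\<Sum>c\<in>C. chi (inner n c y))" by (simp add: sum_negf)
  finally show ?thesis by simp
qed

lemma sum_shift_gen:
  assumes cl: "\<And>c. c \<in> A \<Longrightarrow> (\<lambda>i. c i + x i) \<in> A"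
  shows "(\<Sum>c\<in>A. f (\<lambda>i. c i + (x i::bit))) = (\<Sum>c\<in>A. (f c :: 'b::comm_monoid_add))"
proof -
  let ?h = "\<lambda>c. (\<lambda>i. c i + x i)"
  have inj: "inj_on ?h A" by (rule inj_onI) (metis add_cancel_bit)
  have im: "?h ` A = A"
  proof
    show "?h ` A \<subseteq> A" using cl by auto
    show "A \<subseteq> ?h ` A"
    proof
      fix c assume "c \<in> A"
      then have h: "?h c \<in> A" using cl by auto
      have "c = ?h (?h c)" using add_cancel_bit by metis
      then show "c \<in> ?h ` A" using h by (rule image_eqI)
    qed
  qed
  have "(\<Sum>c\<in>A. f c) = (\<Sum>c\<in>?h ` A. f c)" using im by simp
  also have "\<dots> = (\<Sum>c\<in>A. f (?h c))" using sum.reindex[OF inj] by simp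
  finally show ?thesis by simp
qed

definition YS :: "nat set \<Rightarrow> (nat \<Rightarrow> bit) set" where "YS S = {y. \<forall>i. i \<notin> S \<longrightarrow> y i = 0}"

lemma ind_inj: "inj ind"
proof (rule injI)
  fix A B assume "ind A = ind B"
  then have "\<And>i. (i \<in> A) = (i \<in> B)" unfolding ind_def by (metis one_neq_zero)
  then show "A = B" by blast
qed

lemma YS_eq: "YS S = ind ` Pow S"
proof
  show "YS S \<subseteq> ind ` Pow S"
  proof
    fix y assume y: "y \<in> YS S"
    have "y = ind {i. y i = 1}" unfolding ind_def
      by (rule ext) (metis (mono_tags, lifting) bit_cases mem_Collect_eq)
    moreover have "{i. y i = 1} \<in> Pow S" using y unfolding YS_def by auto
    ultimately show "y \<in> ind ` Pow S" by blast
  qed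
  show "ind ` Pow S \<subseteq> YS S" unfolding YS_def ind_def by auto
qed

lemma card_YS: "finite S \<Longrightarrow> card (YS S) = 2 ^ card S"
  unfolding YS_eq by (simp add: card_image inj_on_subset[OF ind_inj] card_Pow)

lemma finite_YS: "finite S \<Longrightarrow> finite (YS S)"
  unfolding YS_eq by simp

lemma inner_ind1: "a < n \<Longrightarrow> inner n x (ind {a}) = x a"
proof -
  assume a: "a < n"
  have "inner n x (ind {a}) = (\<Sum>i<n. if i = a then x i else 0)"
    unfolding inner_def ind_def by (rule sum.cong) auto
  also have "\<dots> = x a" using a by simp
  finally show ?thesis .
qed

lemma inner_add2: "inner n x (\<lambda>i. y i + z i) = inner n x y + inner n x z"
  unfolding inner_def by (simp only: distrib_left sum.distrib)

lemma charsum_YS: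
  assumes S: "S \<subseteq> {0..<n}"
  shows "(\<Sum>y\<in>YS S. chi (inner n x y)) = (if \<forall>i\<in>S. x i = 0 then 2 ^ card S else 0)"
proof (cases "\<forall>i\<in>S. x i = 0")
  case True
  have fin: "finite S" by (rule finite_subset[OF S finite_atLeastLessThan])
  have "\<And>y. y \<in> YS S \<Longrightarrow> inner n x y = 0"
  proof -
    fix y assume y: "y \<in> YS S"
    have "\<And>i. x i * y i = 0"
    proof -
      fix i show "x i * y i = 0"
        using True y unfolding YS_def by (cases "i \<in> S") auto
    qed
    then show "inner n x y = 0" unfolding inner_def by (intro sum.neutral ballI) blast
  qed
  then have "(\<Sum>y\<in>YS S. chi (inner n x y)) = (\<Sum>y\<in>YS S. 1)" by simp
  also have "\<dots> = 2 ^ card S" using card_YS[OF fin] by simp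
  finally show ?thesis using True by simp
next
  case False
  then obtain a where a: "a \<in> S" "x a \<noteq> 0" by auto
  then have xa: "x a = 1" using bit_cases by auto
  have an: "a < n" using a S by auto
  have cl: "\<And>y. y \<in> YS S \<Longrightarrow> (\<lambda>i. y i + ind {a} i) \<in> YS S"
    using a(1) unfolding YS_def ind_def by auto
  have "(\<Sum>y\<in>YS S. chi (inner n x y)) = (\<Sum>y\<in>YS S. chi (inner n x (\<lambda>i. y i + ind {a} i)))"
    using sum_shift_gen[of "YS S" "ind {a}" "\<lambda>y. chi (inner n x y)", OF cl] by simp
  also have "\<dots> = (\<Sum>y\<in>YS S. - chi (inner n x y))"
    by (simp add: inner_add2 inner_ind1[OF an] xa chi_add)
  also have "\<dots> = - (\<Sum>y\<in>YS S. chi (inner n x y))" by (simp add: sum_negf)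
  finally show ?thesis using False by simp
qed

lemma bit_add_eq_0: "(a::bit) + b = 0 \<longleftrightarrow> a = b"
  using bit_cases[of a] bit_cases[of b] by auto

lemma inner_zero2: "inner n c (\<lambda>_. 0) = 0" unfolding inner_def by simp

lemma count_formula:
  assumes C: "binary_linear_code n C" and md: "is_min_distance n (dual_code n C) dd"
    and S: "S \<subseteq> {0..<n}" and cS: "card S < dd"
  shows "card {c\<in>C. \<forall>i\<in>S. c i = p i} * 2 ^ card S = card C"
proof -
  have fin: "finite S" by (rule finite_subset[OF S finite_atLeastLessThan])
  have finC: "finite C" using C by (rule blc_finite)
  have finY: "finite (YS S)" using fin by (rule finite_YS)
  define F where "F = (\<lambda>c y. chi (inner n (\<lambda>i. c i + p i) y))"
  have "(\<Sum>c\<in>C. \<Sum>y\<in>YS S. F c y) = (\<Sum>c\<in>C. if \<forall>i\<in>S. c i + p i = 0 then 2 ^ card S else 0)"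
    unfolding F_def using charsum_YS[OF S] by simp
  also have "\<dots> = (\<Sum>c\<in>{c\<in>C. \<forall>i\<in>S. c i = p i}. 2 ^ card S)"
    using finC by (simp add: sum.If_cases bit_add_eq_0 Int_def)
  also have "\<dots> = int (card {c\<in>C. \<forall>i\<in>S. c i = p i}) * 2 ^ card S" by simp
  finally have L: "(\<Sum>c\<in>C. \<Sum>y\<in>YS S. F c y) = int (card {c\<in>C. \<forall>i\<in>S. c i = p i}) * 2 ^ card S" .
  have "(\<Sum>c\<in>C. \<Sum>y\<in>YS S. F c y) = (\<Sum>y\<in>YS S. \<Sum>c\<in>C. F c y)" by (rule sum.swap)
  also have "\<dots> = (\<Sum>y\<in>YS S. chi (inner n p y) * (\<Sum>c\<in>C. chi (inner n c y)))"
    unfolding F_def by (simp add: inner_add chi_add sum_distrib_left mult.commute)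
  also have "\<dots> = chi (inner n p (\<lambda>_. 0)) * (\<Sum>c\<in>C. chi (inner n c (\<lambda>_. 0)))"
  proof -
    have z: "(\<lambda>_. 0) \<in> YS S" unfolding YS_def by simp
    have "\<And>y. y \<in> YS S - {(\<lambda>_. 0)} \<Longrightarrow> (\<Sum>c\<in>C. chi (inner n c y)) = 0"
    proof -
      fix y assume y: "y \<in> YS S - {(\<lambda>_. 0)}"
      have yv: "y \<in> vecs n" using y S unfolding YS_def vecs_def by auto
      have "supp n y \<subseteq> S" using y unfolding YS_def supp_def by auto
      then have "wt n y \<le> card S" unfolding wt_def using fin by (simp add: card_mono)
      moreover have "y \<noteq> (\<lambda>_. 0)" using y by auto
      ultimately have "y \<notin> dual_code n C" using md cS unfolding is_min_distance_def by force
      then show "(\<Sum>c\<in>C. chi (inner n c y)) = 0" using charsum_code[OF C yv] by simp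
    qed
    then have "(\<Sum>y\<in>YS S - {(\<lambda>_. 0)}. chi (inner n p y) * (\<Sum>c\<in>C. chi (inner n c y))) = 0"
      by simp
    then show ?thesis using sum.remove[OF finY z, of "\<lambda>y. chi (inner n p y) * (\<Sum>c\<in>C. chi (inner n c y))"]
      by simp
  qed
  also have "\<dots> = int (card C)" by (simp add: inner_zero2)
  finally have "int (card {c\<in>C. \<forall>i\<in>S. c i = p i}) * 2 ^ card S = int (card C)" using L by simp
  then have "int (card {c\<in>C. \<forall>i\<in>S. c i = p i} * 2 ^ card S) = int (card C)" by simp
  then show ?thesis by (simp only: of_nat_eq_iff)
qed

lemma alt_sum_Pow:
  assumes "finite A"
  shows "(\<Sum>U\<in>Pow A. (-1::int) ^ card U) = (if A = {} then 1 else 0)"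
  using assms
proof (induction A rule: finite_induct)
  case empty then show ?case by simp
next
  case (insert a A)
  have inj: "inj_on (insert a) (Pow A)" using insert.hyps(2) by (auto simp: inj_on_def)
  have disj: "Pow A \<inter> insert a ` Pow A = {}" using insert.hyps(2) by auto
  have "(\<Sum>U\<in>Pow (insert a A). (-1::int) ^ card U)
      = (\<Sum>U\<in>Pow A. (-1::int) ^ card U) + (\<Sum>U\<in>insert a ` Pow A. (-1::int) ^ card U)"
    unfolding Pow_insert using insert.hyps(1) disj by (simp add: sum.union_disjoint)
  also have "(\<Sum>U\<in>insert a ` Pow A. (-1::int) ^ card U) = (\<Sum>U\<in>Pow A. (-1::int) ^ card (insert a U))"
    using sum.reindex[OF inj] by simp
  also have "\<dots> = (\<Sum>U\<in>Pow A. - ((-1::int) ^ card U))"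
  proof (rule sum.cong)
    fix U assume "U \<in> Pow A"
    then have "finite U" "a \<notin> U" using insert.hyps finite_subset by auto
    then show "(-1::int) ^ card (insert a U) = - ((-1) ^ card U)" by simp
  qed simp
  finally show ?case by (simp add: sum_negf)
qed

lemma sum_filter_card:
  "finite A \<Longrightarrow> card {x\<in>A. P x} = (\<Sum>x\<in>A. if P x then 1 else (0::nat))"
  by (simp add: sum.If_cases Int_def)

lemma count_swap:
  assumes "finite A" "finite B"
  shows "(\<Sum>a\<in>A. card {b\<in>B. P a b}) = (\<Sum>b\<in>B. card {a\<in>A. P a b})"
proof -
  have "(\<Sum>a\<in>A. card {b\<in>B. P a b}) = (\<Sum>a\<in>A. \<Sum>b\<in>B. if P a b then 1 else (0::nat))"
    using assms by (simp add: sum_filter_card)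
  also have "\<dots> = (\<Sum>b\<in>B. \<Sum>a\<in>A. if P a b then 1 else (0::nat))" by (rule sum.swap)
  also have "\<dots> = (\<Sum>b\<in>B. card {a\<in>A. P a b})"
    using assms by (simp add: sum_filter_card)
  finally show ?thesis .
qed

lemma card_supersets:
  assumes Z: "finite Z" and U: "U \<subseteq> Z" and k: "card U \<le> k"
  shows "card {T. U \<subseteq> T \<and> T \<subseteq> Z \<and> card T = k} = (card Z - card U) choose (k - card U)"
proof -
  have fU: "finite U" using U Z finite_subset by auto
  have bij: "bij_betw (\<lambda>T. T - U) {T. U \<subseteq> T \<and> T \<subseteq> Z \<and> card T = k} {R. R \<subseteq> Z - U \<and> card R = k - card U}"
  proof (rule bij_betw_byWitness[where f' = "\<lambda>R. R \<union> U"])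
    show "\<forall>T\<in>{T. U \<subseteq> T \<and> T \<subseteq> Z \<and> card T = k}. T - U \<union> U = T" by auto
    show "\<forall>R\<in>{R. R \<subseteq> Z - U \<and> card R = k - card U}. R \<union> U - U = R" by auto
    show "(\<lambda>T. T - U) ` {T. U \<subseteq> T \<and> T \<subseteq> Z \<and> card T = k} \<subseteq> {R. R \<subseteq> Z - U \<and> card R = k - card U}"
    proof
      fix R assume "R \<in> (\<lambda>T. T - U) ` {T. U \<subseteq> T \<and> T \<subseteq> Z \<and> card T = k}"
      then obtain T where T: "U \<subseteq> T" "T \<subseteq> Z" "card T = k" "R = T - U" by auto
      have "finite T" using T Z finite_subset by auto
      then show "R \<in> {R. R \<subseteq> Z - U \<and> card R = k - card U}" using T fU by (auto simp: card_Diff_subset)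
    qed
    show "(\<lambda>R. R \<union> U) ` {R. R \<subseteq> Z - U \<and> card R = k - card U} \<subseteq> {T. U \<subseteq> T \<and> T \<subseteq> Z \<and> card T = k}"
    proof
      fix T assume "T \<in> (\<lambda>R. R \<union> U) ` {R. R \<subseteq> Z - U \<and> card R = k - card U}"
      then obtain R where R: "R \<subseteq> Z - U" "card R = k - card U" "T = R \<union> U" by auto
      have "finite R" using R Z finite_subset by auto
      moreover have "R \<inter> U = {}" using R by auto
      ultimately have "card T = card R + card U" using R fU by (simp add: card_Un_disjoint)
      then show "T \<in> {T. U \<subseteq> T \<and> T \<subseteq> Z \<and> card T = k}" using R U k by auto
    qed
  qed
  have "card {T. U \<subseteq> T \<and> T \<subseteq> Z \<and> card T = k} = card {R. R \<subseteq> Z - U \<and> card R = k - card U}"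
    using bij by (rule bij_betw_same_card)
  also have "\<dots> = card (Z - U) choose (k - card U)" using Z by (simp add: n_subsets)
  also have "card (Z - U) = card Z - card U" using U fU by (simp add: card_Diff_subset)
  finally show ?thesis .
qed

lemma dc_count:
  assumes X: "finite X" and B: "\<forall>b\<in>B. b \<subseteq> X \<and> card b = k" and T: "T \<subseteq> X"
  shows "(\<Sum>x\<in>X - T. card {b\<in>B. insert x T \<subseteq> b}) = card {b\<in>B. T \<subseteq> b} * (k - card T)"
proof -
  have finB: "finite B" using finite_subset[of B "Pow X"] B X by auto
  have "(\<Sum>x\<in>X - T. card {b\<in>B. insert x T \<subseteq> b}) = (\<Sum>b\<in>B. card {x\<in>X - T. insert x T \<subseteq> b})"
    by (rule count_swap) (use X finB in auto)
  also have "\<dots> = (\<Sum>b\<in>B. if T \<subseteq> b then k - card T else 0)"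
  proof (rule sum.cong)
    fix b assume b: "b \<in> B"
    show "card {x\<in>X - T. insert x T \<subseteq> b} = (if T \<subseteq> b then k - card T else 0)"
    proof (cases "T \<subseteq> b")
      case True
      have "{x\<in>X - T. insert x T \<subseteq> b} = b - T" using b B True by auto
      moreover have "finite b" using b B finite_subset[OF _ X] by auto
      moreover have "card b = k" using b B by simp
      ultimately show ?thesis using True finite_subset[OF True] by (simp add: card_Diff_subset)
    next
      case False
      then have "{x\<in>X - T. insert x T \<subseteq> b} = {}" by auto
      then show ?thesis using False by simp
    qed
  qed simp
  also have "\<dots> = card {b\<in>B. T \<subseteq> b} * (k - card T)"
    using finB by (simp add: sum.If_cases Int_def)
  finally show ?thesis .
qed

lemma design_down:
  assumes D: "is_design X k B s" and X: "finite X" and s: "1 \<le> s"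
  shows "is_design X k B (s - 1)"
proof -
  have sk: "s \<le> k" and B: "\<forall>b\<in>B. b \<subseteq> X \<and> card b = k" using D unfolding is_design_def by auto
  obtain L where L: "\<And>S. S \<subseteq> X \<Longrightarrow> card S = s \<Longrightarrow> card {b\<in>B. S \<subseteq> b} = L"
    using D unfolding is_design_def by auto
  have "\<forall>T. T \<subseteq> X \<and> card T = s - 1 \<longrightarrow> card {b\<in>B. T \<subseteq> b} = (card X - (s - 1)) * L div (k - (s - 1))"
  proof (intro allI impI)
    fix T assume T: "T \<subseteq> X \<and> card T = s - 1"
    have finT: "finite T" using T X finite_subset by auto
    have "(\<Sum>x\<in>X - T. card {b\<in>B. insert x T \<subseteq> b}) = (\<Sum>x\<in>X - T. L)"
    proof (rule sum.cong)
      fix x assume x: "x \<in> X - T"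
      then have "card (insert x T) = s" using T finT s by simp
      moreover have "insert x T \<subseteq> X" using x T by auto
      ultimately show "card {b\<in>B. insert x T \<subseteq> b} = L" using L[of "insert x T"] by blast
    qed simp
    also have "\<dots> = (card X - (s - 1)) * L" using T finT by (simp add: card_Diff_subset)
    finally have "card {b\<in>B. T \<subseteq> b} * (k - (s - 1)) = (card X - (s - 1)) * L"
      using dc_count[OF X B, of T] T by simp
    moreover have "0 < k - (s - 1)" using sk s by simp
    ultimately show "card {b\<in>B. T \<subseteq> b} = (card X - (s - 1)) * L div (k - (s - 1))"
      by (metis nonzero_mult_div_cancel_right not_less0 zero_less_iff_neq_zero)
  qed
  then show ?thesis unfolding is_design_def using sk B by auto
qed

lemma design_down_le:
  assumes D: "is_design X k B s" and X: "finite X" and s: "s' \<le> s"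
  shows "is_design X k B s'"
proof -
  have "\<And>d. d \<le> s \<Longrightarrow> is_design X k B (s - d)"
  proof -
    fix d show "d \<le> s \<Longrightarrow> is_design X k B (s - d)"
    proof (induction d)
      case 0 then show ?case using D by simp
    next
      case (Suc d)
      then have "is_design X k B (s - d)" by simp
      moreover have "1 \<le> s - d" using Suc.prems by simp
      ultimately have "is_design X k B (s - d - 1)" using design_down X by blast
      moreover have "s - d - 1 = s - Suc d" by simp
      ultimately show ?case by simp
    qed
  qed
  from this[of "s - s'"] show ?thesis using s by simp
qed

lemma arith_contra:
  fixes u m L :: nat
  assumes u4: "4 \<le> u" and m1: "1 \<le> m"
    and e1: "(2 * u - 1) * (2 * m - 1) = (4 * m - 1) * (u - 1)"
    and e2: "(2 * u - 3) * L = (m - 1) * (u - 3)"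
  shows False
proof -
  have i1: "(2 * int u - 1) * (2 * int m - 1) = (4 * int m - 1) * (int u - 1)"
    using arg_cong[OF e1, of int] u4 m1 by (simp add: of_nat_diff)
  have i2: "(2 * int u - 3) * int L = (int m - 1) * (int u - 3)"
    using arg_cong[OF e2, of int] u4 m1 by (simp add: of_nat_diff)
  from i1 have "int u = 2 * int m" by (simp add: algebra_simps)
  with i2 have i3: "(4 * int m - 3) * int L = (int m - 1) * (2 * int m - 3)" by simp
  have m2: "int m \<ge> 2" using u4 \<open>int u = 2 * int m\<close> by simp
  define q where "q = 2 * int m - 2 - 4 * int L"
  have key: "(4 * int m - 3) * q = 6 * (int m - 1)"
    unfolding q_def using i3 by (simp add: algebra_simps)
  show False
  proof (cases "q \<le> 0")
    case True
    have "(4 * int m - 3) * q \<le> 0" using True m2 by (simp add: mult_nonneg_nonpos)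
    then show False using key m2 by simp
  next
    case False
    show False
    proof (cases "q = 1")
      case True
      then have "2 * int m = 3" using key by simp
      then show False by presburger
    next
      case False2: False
      then have "q \<ge> 2" using False by simp
      moreover have "4 * int m - 3 \<ge> 0" using m2 by simp
      ultimately have "(4 * int m - 3) * q \<ge> (4 * int m - 3) * 2" by (rule mult_left_mono)
      then show False using key m2 by simp
    qed
  qed
qed

lemma inner_parity: "inner n x y = (if even (card (supp n x \<inter> supp n y)) then 0 else 1)"
proof -
  have "inner n x y = (if even (card {i\<in>{..<n}. x i * y i \<noteq> 0}) then 0 else 1)"
    unfolding inner_def by (rule bit_sum_parity) simp
  moreover have "{i\<in>{..<n}. x i * y i \<noteq> 0} = supp n x \<inter> supp n y"
    unfolding supp_def by auto
  ultimately show ?thesis by simp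
qed

lemma vanish_iff: "T \<subseteq> {0..<n} \<Longrightarrow> (\<forall>i\<in>T. c i = 0) \<longleftrightarrow> T \<inter> supp n c = {}"
  unfolding supp_def using bit_cases by fastforce

locale hyp =
  fixes n t dd u :: nat and C :: "(nat \<Rightarrow> bit) set"
  assumes C: "binary_linear_code n C" and one: "ones n \<in> C"
    and md: "is_min_distance n (dual_code n C) dd" and tpos: "0 < t" and dd: "dd = t + 1"
    and W: "{w. code_weight_class n C w \<noteq> {} \<and> 0 < w \<and> int w \<le> int n - int t} = {u}"
begin

lemma Csub: "C \<subseteq> vecs n" using C by (rule blc_sub)
lemma finC: "finite C" using C by (rule blc_finite)

lemma u_pos: "0 < u" and u_le: "u + t \<le> n" and u_ex: "\<exists>c\<in>C. wt n c = u"
proof -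
  have "u \<in> {w. code_weight_class n C w \<noteq> {} \<and> 0 < w \<and> int w \<le> int n - int t}" using W by simp
  then have h: "code_weight_class n C u \<noteq> {}" "0 < u" "int u \<le> int n - int t" by auto
  show "0 < u" using h by simp
  show "u + t \<le> n" using h by simp
  show "\<exists>c\<in>C. wt n c = u" using h(1) unfolding code_weight_class_def by auto
qed

lemma wt_small: assumes c: "c \<in> C" "c \<noteq> (\<lambda>_. 0)" "wt n c + t \<le> n" shows "wt n c = u"
proof -
  have "wt n c \<noteq> 0" using c Csub wt_zero_iff by blast
  then have "wt n c \<in> {w. code_weight_class n C w \<noteq> {} \<and> 0 < w \<and> int w \<le> int n - int t}"
    using c unfolding code_weight_class_def by auto
  then show ?thesis using W by simp
qed

lemma strength:
  assumes "S \<subseteq> {0..<n}" "card S \<le> t"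
  shows "card {c\<in>C. \<forall>i\<in>S. c i = p i} * 2 ^ card S = card C"
  using count_formula[OF C md assms(1)] assms(2) dd by simp

lemma dualword: obtains y where "y \<in> dual_code n C" "y \<noteq> (\<lambda>_. 0)" "wt n y = t + 1"
  using md dd unfolding is_min_distance_def by auto

lemma t_odd: "odd t"
proof -
  obtain y where y: "y \<in> dual_code n C" "y \<noteq> (\<lambda>_. 0)" "wt n y = t + 1" by (rule dualword)
  have "inner n (ones n) y = 0" using y(1) one unfolding dual_code_def by auto
  moreover have "supp n (ones n) = {0..<n}" unfolding supp_def ones_def by auto
  ultimately have "even (card (supp n y))" using inner_parity[of n "ones n" y] supp_sub[of n y]
    by (simp add: Int_absorb1) (metis one_neq_zero)
  then show ?thesis using y(3) unfolding wt_def by simp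
qed


definition Gu where "Gu = {c\<in>C. wt n c = u}"
definition g where "g U = card {c\<in>Gu. \<forall>i\<in>U. c i = 0}"

lemma finGu: "finite Gu" unfolding Gu_def using finC by simp

lemma step1:
  assumes T: "T \<subseteq> {0..<n}" "card T = t"
  shows "(g T + 1) * 2 ^ t = card C"
proof -
  have z: "(\<lambda>_. 0) \<in> C" using C by (rule blc_zero)
  have eq: "{c\<in>C. \<forall>i\<in>T. c i = (\<lambda>_. 0) i} = insert (\<lambda>_. 0) {c\<in>Gu. \<forall>i\<in>T. c i = 0}"
  proof (rule set_eqI)
    fix c
    show "c \<in> {c\<in>C. \<forall>i\<in>T. c i = (\<lambda>_. 0) i} \<longleftrightarrow> c \<in> insert (\<lambda>_. 0) {c\<in>Gu. \<forall>i\<in>T. c i = 0}"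
    proof
      assume c: "c \<in> {c\<in>C. \<forall>i\<in>T. c i = (\<lambda>_. 0) i}"
      show "c \<in> insert (\<lambda>_. 0) {c\<in>Gu. \<forall>i\<in>T. c i = 0}"
      proof (cases "c = (\<lambda>_. 0)")
        case False
        have "T \<inter> supp n c = {}" using c vanish_iff[OF T(1), of c] by simp
        then have "supp n c \<subseteq> {0..<n} - T" using supp_sub by blast
        then have "wt n c \<le> n - t" unfolding wt_def using T card_Diff_subset[of T "{0..<n}"]
          by (metis card_atLeastLessThan card_mono diff_zero finite_Diff finite_atLeastLessThan finite_subset)
        then have "wt n c + t \<le> n" using T wt_le[of n c] card_mono[OF _ T(1)] by simp
        then have "wt n c = u" using wt_small c False by simp
        then show ?thesis using c unfolding Gu_def by simp
      qed simp
    next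
      assume "c \<in> insert (\<lambda>_. 0) {c\<in>Gu. \<forall>i\<in>T. c i = 0}"
      then show "c \<in> {c\<in>C. \<forall>i\<in>T. c i = (\<lambda>_. 0) i}" using z unfolding Gu_def by auto
    qed
  qed
  have "(\<lambda>_. 0) \<notin> Gu" unfolding Gu_def using u_pos by (simp add: wt_def supp_def)
  then have "card {c\<in>C. \<forall>i\<in>T. c i = (\<lambda>_. 0) i} = g T + 1" unfolding eq g_def using finGu by simp
  then show ?thesis using strength[OF T(1), of "\<lambda>_. 0"] T(2) by simp
qed


lemma gT: assumes "T \<subseteq> {0..<n}" "card T = t" shows "g T = card C div 2 ^ t - 1"
  using step1[OF assms] by (metis add_diff_cancel_right' nonzero_mult_div_cancel_right power_not_zero zero_neq_numeral)

lemma step2: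
  assumes U: "U \<subseteq> {0..<n}" "card U \<le> t"
  shows "g U * ((n - u - card U) choose (t - card U)) = (card C div 2 ^ t - 1) * ((n - card U) choose (t - card U))"
proof -
  define X where "X = {0..<n::nat}"
  define TT where "TT = {T. U \<subseteq> T \<and> T \<subseteq> X \<and> card T = t}"
  define GU where "GU = {c\<in>Gu. \<forall>i\<in>U. c i = 0}"
  have finX: "finite X" unfolding X_def by simp
  have finTT: "finite TT"
  proof (rule finite_subset[of _ "Pow X"])
    show "TT \<subseteq> Pow X" unfolding TT_def by auto
  qed (simp add: finX)
  have finGU: "finite GU" unfolding GU_def using finGu by simp
  have cardTT: "card TT = (n - card U) choose (t - card U)"
    unfolding TT_def using card_supersets[OF finX, of U t] U unfolding X_def by simp
  have "(\<Sum>T\<in>TT. g T) = (\<Sum>T\<in>TT. card C div 2 ^ t - 1)"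
    by (rule sum.cong) (auto simp: TT_def X_def gT)
  then have L: "(\<Sum>T\<in>TT. g T) = (card C div 2 ^ t - 1) * ((n - card U) choose (t - card U))"
    using cardTT by simp
  have "(\<Sum>T\<in>TT. g T) = (\<Sum>T\<in>TT. card {c\<in>GU. \<forall>i\<in>T. c i = 0})"
  proof (rule sum.cong)
    fix T assume "T \<in> TT"
    then have "U \<subseteq> T" unfolding TT_def by simp
    then have "{c\<in>Gu. \<forall>i\<in>T. c i = 0} = {c\<in>GU. \<forall>i\<in>T. c i = 0}" unfolding GU_def by auto
    then show "g T = card {c\<in>GU. \<forall>i\<in>T. c i = 0}" unfolding g_def by simp
  qed simp
  also have "\<dots> = (\<Sum>c\<in>GU. card {T\<in>TT. \<forall>i\<in>T. c i = 0})"
    by (rule count_swap[OF finTT finGU])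
  also have "\<dots> = (\<Sum>c\<in>GU. (n - u - card U) choose (t - card U))"
  proof (rule sum.cong)
    fix c assume c: "c \<in> GU"
    then have cv: "c \<in> vecs n" and wc: "wt n c = u" using Csub unfolding GU_def Gu_def by auto
    have sX: "supp n c \<subseteq> X" unfolding X_def by (rule supp_sub)
    have e: "{T\<in>TT. \<forall>i\<in>T. c i = 0} = {T. U \<subseteq> T \<and> T \<subseteq> X - supp n c \<and> card T = t}"
    proof (rule set_eqI)
      fix T
      show "T \<in> {T\<in>TT. \<forall>i\<in>T. c i = 0} \<longleftrightarrow> T \<in> {T. U \<subseteq> T \<and> T \<subseteq> X - supp n c \<and> card T = t}"
        unfolding TT_def using vanish_iff[of T n c] unfolding X_def by blast
    qed
    have UX: "U \<subseteq> X - supp n c" using c U vanish_iff[of U n c] unfolding GU_def X_def by blast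
    have cXs: "card (X - supp n c) = n - u"
      using sX wc finX unfolding wt_def X_def by (simp add: card_Diff_subset)
    have "card {T. U \<subseteq> T \<and> T \<subseteq> X - supp n c \<and> card T = t} = (card (X - supp n c) - card U) choose (t - card U)"
      using card_supersets[of "X - supp n c" U t] finX UX U by simp
    then show "card {T\<in>TT. \<forall>i\<in>T. c i = 0} = (n - u - card U) choose (t - card U)"
      using e cXs by simp
  qed simp
  also have "\<dots> = g U * ((n - u - card U) choose (t - card U))"
    unfolding g_def GU_def[symmetric] by simp
  finally show ?thesis using L by simp
qed


lemma step3:
  assumes U: "U \<subseteq> {0..<n}" "U' \<subseteq> {0..<n}" "card U = card U'" "card U \<le> t"
  shows "g U = g U'"
proof -
  have pos: "0 < (n - u - card U) choose (t - card U)"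
    using u_le U(4) by (simp add: zero_less_binomial_iff)
  have "g U * ((n - u - card U) choose (t - card U)) = g U' * ((n - u - card U) choose (t - card U))"
    using step2[OF U(1) U(4)] step2[OF U(2)] U(3,4) by simp
  then show ?thesis using pos by simp
qed

lemma step4:
  assumes V: "V \<subseteq> {0..<n}"
  shows "int (card {c\<in>Gu. V \<subseteq> supp n c}) = (\<Sum>U\<in>Pow V. (-1) ^ card U * int (g U))"
proof -
  have finV: "finite V" using V finite_subset by auto
  have "(\<Sum>U\<in>Pow V. (-1) ^ card U * int (g U))
      = (\<Sum>U\<in>Pow V. \<Sum>c\<in>Gu. if \<forall>i\<in>U. c i = 0 then (-1) ^ card U else (0::int))"
  proof (rule sum.cong)
    fix U assume "U \<in> Pow V"
    have "int (g U) = (\<Sum>c\<in>Gu. if \<forall>i\<in>U. c i = 0 then 1 else (0::int))"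
      unfolding g_def using finGu by (simp add: sum.If_cases Int_def)
    then have "(-1) ^ card U * int (g U) = (\<Sum>c\<in>Gu. (-1) ^ card U * (if \<forall>i\<in>U. c i = 0 then 1 else (0::int)))"
      by (simp add: sum_distrib_left)
    also have "\<dots> = (\<Sum>c\<in>Gu. if \<forall>i\<in>U. c i = 0 then (-1) ^ card U else (0::int))"
      by (rule sum.cong) auto
    finally show "(-1) ^ card U * int (g U) = (\<Sum>c\<in>Gu. if \<forall>i\<in>U. c i = 0 then (-1) ^ card U else (0::int))" .
  qed simp
  also have "\<dots> = (\<Sum>c\<in>Gu. \<Sum>U\<in>Pow V. if \<forall>i\<in>U. c i = 0 then (-1) ^ card U else (0::int))"
    by (rule sum.swap)
  also have "\<dots> = (\<Sum>c\<in>Gu. if V \<subseteq> supp n c then 1 else 0)"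
  proof (rule sum.cong)
    fix c assume c: "c \<in> Gu"
    have "(\<Sum>U\<in>Pow V. if \<forall>i\<in>U. c i = 0 then (-1) ^ card U else (0::int))
        = (\<Sum>U\<in>{U\<in>Pow V. \<forall>i\<in>U. c i = 0}. (-1) ^ card U)"
      using finV by (simp only: sum.inter_filter finite_Pow_iff)
    also have "{U\<in>Pow V. \<forall>i\<in>U. c i = 0} = Pow (V - supp n c)"
    proof (rule set_eqI)
      fix U
      show "U \<in> {U\<in>Pow V. \<forall>i\<in>U. c i = 0} \<longleftrightarrow> U \<in> Pow (V - supp n c)"
        using vanish_iff[of U n c] V by blast
    qed
    also have "(\<Sum>U\<in>Pow (V - supp n c). (-1::int) ^ card U) = (if V - supp n c = {} then 1 else 0)"
      using finV by (simp add: alt_sum_Pow)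
    finally show "(\<Sum>U\<in>Pow V. if \<forall>i\<in>U. c i = 0 then (-1) ^ card U else (0::int))
        = (if V \<subseteq> supp n c then 1 else 0)" by simp
  qed simp
  also have "\<dots> = int (card {c\<in>Gu. V \<subseteq> supp n c})"
    using finGu by (simp add: sum.If_cases Int_def)
  finally show ?thesis by simp
qed

lemma step5:
  assumes V: "V \<subseteq> {0..<n}" "V' \<subseteq> {0..<n}" "card V = card V'" "card V \<le> t"
  shows "card {c\<in>Gu. V \<subseteq> supp n c} = card {c\<in>Gu. V' \<subseteq> supp n c}"
proof -
  have fin: "finite V" "finite V'" using V finite_subset by auto
  obtain h where h: "bij_betw h V V'" using finite_same_card_bij[OF fin V(3)] by auto
  have bp: "bij_betw (image h) (Pow V) (Pow V')" using h by (rule bij_betw_Pow)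
  have "(\<Sum>U\<in>Pow V'. (-1) ^ card U * int (g U)) = (\<Sum>U\<in>Pow V. (-1) ^ card (h ` U) * int (g (h ` U)))"
    using sum.reindex_bij_betw[OF bp, of "\<lambda>U. (-1) ^ card U * int (g U)"] by simp
  also have "\<dots> = (\<Sum>U\<in>Pow V. (-1) ^ card U * int (g U))"
  proof (rule sum.cong)
    fix U assume U: "U \<in> Pow V"
    have inj: "inj_on h U" using bij_betw_imp_inj_on[OF h] inj_on_subset U by blast
    then have cu: "card (h ` U) = card U" by (rule card_image)
    have hU: "h ` U \<subseteq> V'" using h U bij_betw_imp_surj_on by blast
    have "card U \<le> card V" using U fin by (simp add: card_mono)
    then have "g (h ` U) = g U" using step3[of "h ` U" U] hU U V cu by auto
    then show "(-1) ^ card (h ` U) * int (g (h ` U)) = (-1) ^ card U * int (g U)" using cu by simp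
  qed simp
  finally show ?thesis using step4[OF V(1)] step4[OF V(2)] by simp
qed


lemma t_le_u: "t \<le> u"
proof (rule ccontr)
  assume "\<not> t \<le> u"
  then have ut: "u < t" by simp
  define X where "X = {0..<n::nat}"
  obtain c0 where c0: "c0 \<in> C" "wt n c0 = u" using u_ex by auto
  have V0X: "supp n c0 \<subseteq> X" unfolding X_def by (rule supp_sub)
  have cV0: "card (supp n c0) = u" using c0 unfolding wt_def by simp
  have "c0 \<in> {c\<in>Gu. supp n c0 \<subseteq> supp n c}" using c0 unfolding Gu_def by simp
  then have pos0: "0 < card {c\<in>Gu. supp n c0 \<subseteq> supp n c}" using finGu by (auto simp: card_gt_0_iff)
  obtain y where y: "y \<in> dual_code n C" "y \<noteq> (\<lambda>_. 0)" "wt n y = t + 1" by (rule dualword)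
  define Y where "Y = supp n y"
  have YX: "Y \<subseteq> X" unfolding Y_def X_def by (rule supp_sub)
  have cY: "card Y = t + 1" using y unfolding Y_def wt_def by simp
  have "t + 1 \<le> n" using y(3) wt_le[of n y] by simp
  have cXY: "card (X - Y) = n - (t + 1)" using YX cY unfolding X_def
    by (simp add: card_Diff_subset finite_subset)
  then have "u - 1 \<le> card (X - Y)" using u_le by simp
  then obtain W where W: "W \<subseteq> X - Y" "card W = u - 1" "finite W" by (rule obtain_subset_with_card_n)
  have "Y \<noteq> {}" using cY by auto
  then obtain a where a: "a \<in> Y" by auto
  define V where "V = insert a W"
  have aW: "a \<notin> W" using W a by auto
  have cV: "card V = u" unfolding V_def using aW W u_pos by simp
  have VX: "V \<subseteq> X" unfolding V_def using W a YX by auto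
  have "card {c\<in>Gu. V \<subseteq> supp n c} = card {c\<in>Gu. supp n c0 \<subseteq> supp n c}"
    using step5[of V "supp n c0"] VX V0X cV cV0 ut unfolding X_def by simp
  then have "card {c\<in>Gu. V \<subseteq> supp n c} > 0" using pos0 by simp
  then obtain c where c: "c \<in> Gu" "V \<subseteq> supp n c" by (metis (no_types, lifting) card.empty empty_Collect_eq less_irrefl)
  have "card (supp n c) = u" using c unfolding Gu_def wt_def by simp
  then have Vc: "V = supp n c" using card_subset_eq[OF finite_supp c(2)] cV by simp
  have "supp n c \<inter> supp n y = {a}" using Vc[symmetric] W a unfolding V_def Y_def by auto
  then have "inner n c y = 1" using inner_parity[of n c y] by simp
  moreover have "inner n c y = 0" using y(1) c unfolding dual_code_def Gu_def by auto
  ultimately show False by simp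
qed


lemma ones_vec: "ones n \<in> vecs n" unfolding ones_def vecs_def by simp
lemma wt_ones: "wt n (ones n) = n"
proof -
  have "supp n (ones n) = {0..<n}" unfolding supp_def ones_def by auto
  then show ?thesis unfolding wt_def by simp
qed

lemma u_lt_n: "u < n" using u_le tpos by simp

lemma n_eq: "n = 2 * u"
proof -
  obtain c0 where c0: "c0 \<in> C" "wt n c0 = u" using u_ex by auto
  define c1 where "c1 = (\<lambda>i. c0 i + ones n i)"
  have c1C: "c1 \<in> C" unfolding c1_def using blc_add[OF C c0(1) one] .
  have w1: "wt n c1 = n - u" unfolding c1_def wt_plus_ones c0(2) ..
  have "c1 \<noteq> (\<lambda>_. 0)" using w1 u_lt_n by (auto simp: wt_def supp_def)
  moreover have "wt n c1 + t \<le> n" using w1 t_le_u u_le by simp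
  ultimately have "wt n c1 = u" using wt_small c1C by simp
  then show ?thesis using w1 u_lt_n by simp
qed

lemma all_wt:
  assumes c: "c \<in> C" "c \<noteq> (\<lambda>_. 0)" "c \<noteq> ones n"
  shows "wt n c = u"
proof (cases "wt n c + t \<le> n")
  case True then show ?thesis using wt_small c by simp
next
  case False
  define c1 where "c1 = (\<lambda>i. c i + ones n i)"
  have c1C: "c1 \<in> C" unfolding c1_def using blc_add[OF C c(1) one] .
  have w1: "wt n c1 = n - wt n c" unfolding c1_def wt_plus_ones ..
  have "c1 \<noteq> (\<lambda>_. 0)"
  proof
    assume "c1 = (\<lambda>_. 0)"
    then have "\<And>i. c i = ones n i" unfolding c1_def by (metis bit_add_eq_0)
    then show False using c(3) by auto
  qed
  moreover have "wt n c1 + t \<le> n" using w1 False t_le_u u_le wt_le[of n c] by simp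
  ultimately have "wt n c1 = u" using wt_small c1C by simp
  then show ?thesis using w1 False u_le wt_le[of n c] t_le_u by simp
qed

definition BB where "BB = support_design n C u"

lemma BB_blocks: "\<forall>b\<in>BB. b \<subseteq> {0..<n} \<and> card b = u"
  unfolding BB_def support_design_def code_weight_class_def wt_def using supp_sub by auto

lemma lam_eq:
  assumes S: "S \<subseteq> {0..<n}" "S \<noteq> {}"
  shows "card {b\<in>BB. S \<subseteq> b} + 1 = card {c\<in>C. \<forall>i\<in>S. c i = 1}"
proof -
  define A where "A = {c\<in>C. wt n c = u \<and> S \<subseteq> supp n c}"
  have finA: "finite A" unfolding A_def using finC by simp
  have "{b\<in>BB. S \<subseteq> b} = supp n ` A"
    unfolding BB_def support_design_def code_weight_class_def A_def by auto
  moreover have "A \<subseteq> vecs n" using Csub unfolding A_def by auto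
  then have "inj_on (supp n) A" using inj_on_subset[OF supp_inj[of n]] by blast
  ultimately have c1: "card {b\<in>BB. S \<subseteq> b} = card A" by (simp add: card_image)
  have eq: "{c\<in>C. \<forall>i\<in>S. c i = 1} = insert (ones n) A"
  proof (rule set_eqI)
    fix c
    show "c \<in> {c\<in>C. \<forall>i\<in>S. c i = 1} \<longleftrightarrow> c \<in> insert (ones n) A"
    proof
      assume c: "c \<in> {c\<in>C. \<forall>i\<in>S. c i = 1}"
      show "c \<in> insert (ones n) A"
      proof (cases "c = ones n")
        case False
        obtain a where a: "a \<in> S" using S by auto
        have "c \<noteq> (\<lambda>_. 0)" using c a by auto
        then have "wt n c = u" using all_wt c False by simp
        moreover have "S \<subseteq> supp n c" using c S unfolding supp_def by auto
        ultimately show ?thesis using c unfolding A_def by simp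
      qed simp
    next
      assume c: "c \<in> insert (ones n) A"
      show "c \<in> {c\<in>C. \<forall>i\<in>S. c i = 1}"
      proof (cases "c = ones n")
        case True then show ?thesis using one S unfolding ones_def by auto
      next
        case False
        then have "c \<in> C" "S \<subseteq> supp n c" using c unfolding A_def by auto
        then show ?thesis unfolding supp_def using bit_cases by auto
      qed
    qed
  qed
  have "ones n \<notin> A" unfolding A_def using wt_ones u_lt_n by auto
  then show ?thesis using eq c1 finA by simp
qed

lemma Nformula:
  assumes "S \<subseteq> {0..<n}" "card S \<le> t"
  shows "card {c\<in>C. \<forall>i\<in>S. c i = 1} * 2 ^ card S = card C"
  using strength[OF assms, of "\<lambda>_. 1"] by simp

lemma lam_val:
  assumes S: "S \<subseteq> {0..<n}" "S \<noteq> {}" "card S \<le> t"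
  shows "(card {b\<in>BB. S \<subseteq> b} + 1) * 2 ^ card S = card C"
  using lam_eq[OF S(1,2)] Nformula[OF S(1,3)] by simp

lemma design_t:
  assumes s: "1 \<le> s" "s \<le> t"
  shows "is_design {0..<n} u BB s"
proof -
  have "s \<le> u" using s t_le_u by simp
  moreover have "\<forall>S. S \<subseteq> {0..<n} \<and> card S = s \<longrightarrow> card {b\<in>BB. S \<subseteq> b} = card C div 2 ^ s - 1"
  proof (intro allI impI)
    fix S assume S: "S \<subseteq> {0..<n} \<and> card S = s"
    then have "S \<noteq> {}" using s by auto
    then have "(card {b\<in>BB. S \<subseteq> b} + 1) * 2 ^ s = card C" using lam_val[of S] S s by simp
    then show "card {b\<in>BB. S \<subseteq> b} = card C div 2 ^ s - 1"
      by (metis add_diff_cancel_right' nonzero_mult_div_cancel_right power_not_zero zero_neq_numeral)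
  qed
  ultimately show ?thesis unfolding is_design_def using BB_blocks by blast
qed


definition Sig where "Sig = {s. 1 \<le> s \<and> is_design {0..<n} u BB s}"

lemma Sig_fin: "finite Sig"
  by (rule finite_subset[of _ "{..u}"]) (auto simp: Sig_def is_design_def)

lemma one_Sig: "1 \<in> Sig" unfolding Sig_def using design_t[of 1] tpos by simp

lemma lam_def_card: "card C \<ge> 3"
proof -
  obtain c0 where c0: "c0 \<in> C" "wt n c0 = u" using u_ex by auto
  have z: "(\<lambda>_. 0) \<in> C" using C by (rule blc_zero)
  have "wt n (\<lambda>_. 0) = 0" by (simp add: wt_def supp_def)
  then have d1: "c0 \<noteq> (\<lambda>_. 0)" using c0 u_pos by auto
  have d2: "c0 \<noteq> ones n" using c0 wt_ones u_lt_n by auto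
  have d3: "ones n \<noteq> (\<lambda>_. 0)" using wt_ones u_lt_n \<open>wt n (\<lambda>_. 0) = 0\<close> by auto
  have "{(\<lambda>_. 0), ones n, c0} \<subseteq> C" using z one c0 by auto
  then have "card {(\<lambda>_. 0), ones n, c0} \<le> card C" using finC by (rule card_mono[rotated])
  moreover have "card {(\<lambda>_. 0), ones n, c0} = 3" using d1 d2 d3 by auto
  ultimately show ?thesis by simp
qed

lemma case_t1:
  assumes t1: "t = 1" and s: "s \<in> Sig"
  shows "s \<le> 1"
proof (rule ccontr)
  assume "\<not> s \<le> 1"
  then have "is_design {0..<n} u BB 2" using s design_down_le[of "{0..<n}" u BB s 2] unfolding Sig_def by simp
  then obtain L where L: "\<And>S. S \<subseteq> {0..<n} \<Longrightarrow> card S = 2 \<Longrightarrow> card {b\<in>BB. S \<subseteq> b} = L"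
    unfolding is_design_def by auto
  obtain y where y: "y \<in> dual_code n C" "y \<noteq> (\<lambda>_. 0)" "wt n y = t + 1" by (rule dualword)
  have "card (supp n y) = 2" using y t1 unfolding wt_def by simp
  then obtain a b where ab: "supp n y = {a, b}" "a \<noteq> b" by (meson card_2_iff)
  have abn: "a < n" "b < n" using ab(1) supp_sub[of n y] by auto
  have same: "\<And>c. c \<in> C \<Longrightarrow> c a = c b"
  proof -
    fix c assume c: "c \<in> C"
    have "inner n c y = 0" using c y(1) unfolding dual_code_def by auto
    then have ev: "even (card (supp n c \<inter> {a, b}))" using inner_parity[of n c y] ab(1)
      by (metis one_neq_zero)
    show "c a = c b"
    proof (rule ccontr)
      assume ne: "c a \<noteq> c b"
      then have "c a = 0 \<and> c b = 1 \<or> c a = 1 \<and> c b = 0" using bit_cases[of "c a"] bit_cases[of "c b"] by auto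
      then have "supp n c \<inter> {a, b} = {a} \<or> supp n c \<inter> {a, b} = {b}"
        using abn ab(2) unfolding supp_def by auto
      then show False using ev by auto
    qed
  qed
  have e: "{c\<in>C. \<forall>i\<in>{a,b}. c i = 1} = {c\<in>C. \<forall>i\<in>{a}. c i = 1}"
  proof (rule set_eqI)
    fix c show "c \<in> {c\<in>C. \<forall>i\<in>{a,b}. c i = 1} \<longleftrightarrow> c \<in> {c\<in>C. \<forall>i\<in>{a}. c i = 1}"
      using same[of c] by auto
  qed
  have "card {b'\<in>BB. {a,b} \<subseteq> b'} = card {b'\<in>BB. {a} \<subseteq> b'}"
    using lam_eq[of "{a,b}"] lam_eq[of "{a}"] abn e by simp
  moreover have "card {b'\<in>BB. {a,b} \<subseteq> b'} = L" using L[of "{a,b}"] abn ab(2) by simp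
  ultimately have La: "card {b'\<in>BB. {a} \<subseteq> b'} = L" by simp
  have "(\<Sum>x\<in>{0..<n} - {a}. card {b'\<in>BB. insert x {a} \<subseteq> b'}) = card {b'\<in>BB. {a} \<subseteq> b'} * (u - card {a})"
    using dc_count[OF _ BB_blocks, of "{a}"] abn by simp
  moreover have "(\<Sum>x\<in>{0..<n} - {a}. card {b'\<in>BB. insert x {a} \<subseteq> b'}) = (\<Sum>x\<in>{0..<n} - {a}. L)"
  proof (rule sum.cong)
    fix x assume x: "x \<in> {0..<n} - {a}"
    then have "insert x {a} \<subseteq> {0..<n}" "card (insert x {a}) = 2" using abn by auto
    then show "card {b'\<in>BB. insert x {a} \<subseteq> b'} = L" by (rule L)
  qed simp
  ultimately have "(n - 1) * L = L * (u - 1)" using abn La by (simp; metis)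
  then have "(n - 1) * L = (u - 1) * L" by (simp add: mult.commute)
  then have "L = 0 \<or> n - 1 = u - 1" by (simp; blast)
  then have "L = 0" using n_eq u_pos by auto
  then have "(0 + 1) * 2 ^ 1 = card C" using lam_val[of "{a}"] La abn t1 by simp
  then show False using lam_def_card by simp
qed


lemma t3: "t \<noteq> 1 \<Longrightarrow> 3 \<le> t" using t_odd tpos by presburger

lemma three_Sig: "t \<noteq> 1 \<Longrightarrow> 3 \<in> Sig" unfolding Sig_def using design_t[of 3] t3 by simp

lemma case_t3:
  assumes t1: "t \<noteq> 1" and s: "s \<in> Sig"
  shows "s \<le> 3"
proof (rule ccontr)
  assume "\<not> s \<le> 3"
  then have D4: "is_design {0..<n} u BB 4" using s design_down_le[of "{0..<n}" u BB s 4] unfolding Sig_def by simp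
  then have u4: "4 \<le> u" unfolding is_design_def by simp
  obtain L where L: "\<And>S. S \<subseteq> {0..<n} \<Longrightarrow> card S = 4 \<Longrightarrow> card {b\<in>BB. S \<subseteq> b} = L"
    using D4 unfolding is_design_def by auto
  have tt: "3 \<le> t" using t3 t1 by simp
  have nn: "8 \<le> n" using n_eq u4 by simp
  define T3 where "T3 = {0::nat, 1, 2}"
  have T3X: "T3 \<subseteq> {0..<n}" "card T3 = 3" using nn unfolding T3_def by auto
  define m where "m = card {b\<in>BB. T3 \<subseteq> b} + 1"
  have "T3 \<noteq> {}" unfolding T3_def by simp
  then have m8: "m * 8 = card C" using lam_val[of T3] T3X tt unfolding m_def by auto
  have l1: "card {b\<in>BB. {0} \<subseteq> b} = 4 * m - 1"
  proof -
    have "(card {b\<in>BB. {0} \<subseteq> b} + 1) * 2 = card C" using lam_val[of "{0}"] nn tt by simp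
    then show ?thesis using m8 by simp
  qed
  have l2: "\<And>x. x \<in> {0..<n} - {0} \<Longrightarrow> card {b\<in>BB. insert x {0} \<subseteq> b} = 2 * m - 1"
  proof -
    fix x assume x: "x \<in> {0..<n} - {0}"
    then have "insert x {0} \<subseteq> {0..<n}" "insert x {0} \<noteq> {}" "card (insert x {0}) = 2" using nn by auto
    then have "(card {b\<in>BB. insert x {0} \<subseteq> b} + 1) * 2 ^ 2 = card C" using lam_val[of "insert x {0}"] tt by simp
    then show "card {b\<in>BB. insert x {0} \<subseteq> b} = 2 * m - 1" using m8 by simp
  qed
  have "(\<Sum>x\<in>{0..<n} - {0}. card {b\<in>BB. insert x {0} \<subseteq> b}) = card {b\<in>BB. {0} \<subseteq> b} * (u - card {0::nat})"
    using dc_count[OF _ BB_blocks, of "{0}"] nn by simp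
  moreover have "(\<Sum>x\<in>{0..<n} - {0}. card {b\<in>BB. insert x {0} \<subseteq> b}) = (\<Sum>x\<in>{0..<n} - {0}. 2 * m - 1)"
  proof (rule sum.cong)
    fix x assume "x \<in> {0..<n} - {0}" then show "card {b\<in>BB. insert x {0} \<subseteq> b} = 2 * m - 1" by (rule l2)
  qed simp
  ultimately have e1: "(n - 1) * (2 * m - 1) = (4 * m - 1) * (u - 1)" using l1 nn by simp
  have "(\<Sum>x\<in>{0..<n} - T3. card {b\<in>BB. insert x T3 \<subseteq> b}) = card {b\<in>BB. T3 \<subseteq> b} * (u - card T3)"
    using dc_count[OF _ BB_blocks T3X(1)] by simp
  moreover have "(\<Sum>x\<in>{0..<n} - T3. card {b\<in>BB. insert x T3 \<subseteq> b}) = (\<Sum>x\<in>{0..<n} - T3. L)"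
  proof (rule sum.cong)
    fix x assume x: "x \<in> {0..<n} - T3"
    then have "insert x T3 \<subseteq> {0..<n}" "card (insert x T3) = 4" using T3X by (auto simp: T3_def)
    then show "card {b\<in>BB. insert x T3 \<subseteq> b} = L" by (rule L)
  qed simp
  moreover have "card ({0..<n} - T3) = n - 3"
    using T3X card_Diff_subset[OF finite_subset[OF T3X(1) finite_atLeastLessThan] T3X(1)] by simp
  ultimately have e2: "(n - 3) * L = (m - 1) * (u - 3)" using T3X unfolding m_def by simp
  have "m \<ge> 1" unfolding m_def by simp
  then show False using arith_contra[OF u4 _ _ _] e1 e2 n_eq by simp
qed

lemma Max_Sig: "Max Sig \<in> {1, 3}"
proof (cases "t = 1")
  case True
  have "Max Sig = 1" by (rule Max_eqI[OF Sig_fin]) (use case_t1[OF True] one_Sig in auto)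
  then show ?thesis by simp
next
  case False
  have "Max Sig = 3" by (rule Max_eqI[OF Sig_fin]) (use case_t3[OF False] three_Sig[OF False] in auto)
  then show ?thesis by simp
qed

end

theorem lemma3p1:
  fixes n t dd :: nat and C :: "(nat \<Rightarrow> bit) set"
  assumes "binary_linear_code n C"
    and "ones n \<in> C"
    and "is_min_distance n (dual_code n C) dd"
    and "t > 0"
    and "int dd - int t = 1"
    and "card {u. code_weight_class n C u \<noteq> {} \<and> 0 < u \<and> int u \<le> int n - int t} = 1"
  shows "is_design {0..<n} (n div 2) (support_design n C (n div 2)) 1 \<and>
         Max {s. 1 \<le> s \<and> is_design {0..<n} (n div 2) (support_design n C (n div 2)) s} \<in> {1, 3}"
proof -
  obtain u where u: "{u. code_weight_class n C u \<noteq> {} \<and> 0 < u \<and> int u \<le> int n - int t} = {u}"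
    using assms(6) by (rule card_1_singletonE)
  have dd: "dd = t + 1" using assms(5) by simp
  interpret H: hyp n t dd u C
    by (unfold_locales) (use assms dd u in auto)
  have nu: "n div 2 = u" using H.n_eq by simp
  have d1: "is_design {0..<n} u H.BB 1" using H.design_t[of 1] assms(4) by simp
  show ?thesis
    unfolding nu H.BB_def[symmetric] H.Sig_def[symmetric] using d1 H.Max_Sig by simp
qed

end
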